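(* Let $G$ be an interval filament graph with a filament representation $\varphi$. Suppose a cop occupies the vertex $u$ and the robber occupies a vertex whose filament is contained in the bottom region of $\varphi(u)$. Then, as long as a cop stays on $u$, the robber stays on vertices whose filaments are contained in the bottom region of $\varphi(u)$ (any move leaving it results in his immediate capture).
   Context: An interval filament on $[a,b]$ ($a<b$) is the graph of a continuous $f\colon[a,b]\to\mathbb{R}$ with $f(a)=f(b)=0$ and $f>0$ on $(a,b)$. An interval filament graph has a representation $\varphi$ assigning filaments to vertices so that distinct vertices are adjacent iff their filaments intersect. Each filament splits the upper half-plane into the unbounded top region and the bounded bottom region (the region between the filament and the $x$-axis). Game of cops and robber: alternate moves, each piece stays or moves to an adjacent vertex; capture when a cop occupies the robber's vertex (a robber moving to a neighbor of a cop's vertex is captured in the next cop move). *)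

theory Defs
  imports "HOL-Analysis.Analysis"
begin

definition filament :: "('v \<Rightarrow> real) \<Rightarrow> ('v \<Rightarrow> real) \<Rightarrow> ('v \<Rightarrow> real \<Rightarrow> real) \<Rightarrow> 'v \<Rightarrow> (real \<times> real) set"
  where "filament lft rgt f v = {(x, f v x) | x. lft v \<le> x \<and> x \<le> rgt v}"

definition is_interval_filament :: "real \<Rightarrow> real \<Rightarrow> (real \<Rightarrow> real) \<Rightarrow> bool"
  where "is_interval_filament a b g \<longleftrightarrow>
     a < b \<and> continuous_on {a..b} g \<and> g a = 0 \<and> g b = 0 \<and> (\<forall>x\<in>{a<..<b}. g x > 0)"

definition filament_representation ::
  "'v set \<Rightarrow> ('v \<Rightarrow> 'v \<Rightarrow> bool) \<Rightarrow> ('v \<Rightarrow> real) \<Rightarrow> ('v \<Rightarrow> real) \<Rightarrow> ('v \<Rightarrow> real \<Rightarrow> real) \<Rightarrow> bool"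
  where "filament_representation V E lft rgt f \<longleftrightarrow>
     (\<forall>u v. E u v \<longrightarrow> u \<in> V \<and> v \<in> V \<and> u \<noteq> v) \<and>
     (\<forall>v\<in>V. is_interval_filament (lft v) (rgt v) (f v)) \<and>
     (\<forall>u\<in>V. \<forall>v\<in>V. u \<noteq> v \<longrightarrow> (E u v \<longleftrightarrow> filament lft rgt f u \<inter> filament lft rgt f v \<noteq> {}))"

text \<open>Bottom region of the filament of u: the part of the closed upper half-plane
  {y \<ge> 0} lying below the filament, i.e. the bounded component of the closed upper
  half-plane minus the filament.\<close>
definition bottom_region :: "('v \<Rightarrow> real) \<Rightarrow> ('v \<Rightarrow> real) \<Rightarrow> ('v \<Rightarrow> real \<Rightarrow> real) \<Rightarrow> 'v \<Rightarrow> (real \<times> real) set"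
  where "bottom_region lft rgt f u = {(x, y). lft u < x \<and> x < rgt u \<and> 0 \<le> y \<and> y < f u x}"

definition robber_move :: "('v \<Rightarrow> 'v \<Rightarrow> bool) \<Rightarrow> 'v \<Rightarrow> 'v \<Rightarrow> bool"
  where "robber_move E v w \<longleftrightarrow> w = v \<or> E v w"

end

theory Submission
  imports Defs
begin

lemma nonneg_fil:
  assumes "is_interval_filament c d h" "c \<le> x" "x \<le> d"
  shows "0 \<le> h x"
  using assms unfolding is_interval_filament_def
  by (metis greaterThanLessThan_iff less_eq_real_def order_refl)

lemma key:
  assumes U: "is_interval_filament a b g" and W: "is_interval_filament c d h"
    and t: "a < t" "t < b" "c \<le> t" "t \<le> d" "h t < g t"
    and noint: "\<forall>x. a \<le> x \<and> x \<le> b \<and> c \<le> x \<and> x \<le> d \<longrightarrow> h x \<noteq> g x"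
  shows "\<forall>x. c \<le> x \<and> x \<le> d \<longrightarrow> a < x \<and> x < b \<and> 0 \<le> h x \<and> h x < g x"
proof -
  have cg: "continuous_on {a..b} g" and ch: "continuous_on {c..d} h"
    using U W unfolding is_interval_filament_def by auto
  have P: "h x < g x" if x: "a \<le> x" "x \<le> b" "c \<le> x" "x \<le> d" for x
  proof (rule ccontr)
    assume "\<not> h x < g x"
    hence hx: "g x - h x \<le> 0" by simp
    show False
    proof (cases "t \<le> x")
      case True
      have "continuous_on {t..x} (\<lambda>y. g y - h y)"
        apply (intro continuous_intros)
        using continuous_on_subset[OF cg, of "{t..x}"] continuous_on_subset[OF ch, of "{t..x}"] t x True by auto
      from IVT2'[of "\<lambda>y. g y - h y" x 0 t, OF hx _ True this] t
      obtain z where "t \<le> z" "z \<le> x" "g z - h z = 0" by auto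
      thus False using noint[rule_format, of z] t x by auto
    next
      case False
      have "continuous_on {x..t} (\<lambda>y. g y - h y)"
        apply (intro continuous_intros)
        using continuous_on_subset[OF cg, of "{x..t}"] continuous_on_subset[OF ch, of "{x..t}"] t x False by auto
      from IVT'[of "\<lambda>y. g y - h y" x 0 t, OF hx _ _ this] t False
      obtain z where "x \<le> z" "z \<le> t" "g z - h z = 0" by auto
      thus False using noint[rule_format, of z] t x by auto
    qed
  qed
  have ga: "g a = 0" "g b = 0" using U unfolding is_interval_filament_def by auto
  have ac: "a < c"
  proof (rule ccontr)
    assume "\<not> a < c"
    hence "h a < g a" using P[of a] t by auto
    moreover have "0 \<le> h a" using nonneg_fil[OF W] \<open>\<not> a < c\<close> t by auto
    ultimately show False using ga by simp
  qed
  have db: "d < b"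
  proof (rule ccontr)
    assume "\<not> d < b"
    hence "h b < g b" using P[of b] t by auto
    moreover have "0 \<le> h b" using nonneg_fil[OF W] \<open>\<not> d < b\<close> t by auto
    ultimately show False using ga by simp
  qed
  show ?thesis using P ac db nonneg_fil[OF W] by auto
qed

theorem lemma1:
  fixes V :: "'v set" and E :: "'v \<Rightarrow> 'v \<Rightarrow> bool"
    and lft rgt :: "'v \<Rightarrow> real" and f :: "'v \<Rightarrow> real \<Rightarrow> real"
    and u :: 'v and rob :: "nat \<Rightarrow> 'v" and n :: nat
  assumes rep: "filament_representation V E lft rgt f"
    and u: "u \<in> V"
    and start: "rob 0 \<in> V" "filament lft rgt f (rob 0) \<subseteq> bottom_region lft rgt f u"
    and moves: "\<forall>i<n. robber_move E (rob i) (rob (Suc i))"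
    and not_captured: "\<forall>i\<le>n. rob i \<noteq> u \<and> \<not> E u (rob i)"
  shows "\<forall>i\<le>n. filament lft rgt f (rob i) \<subseteq> bottom_region lft rgt f u"
proof -
  note Rall = rep[unfolded filament_representation_def]
  have R1: "\<And>a b. E a b \<Longrightarrow> a \<in> V \<and> b \<in> V \<and> a \<noteq> b"
    using conjunct1[OF Rall] by blast
  have R2: "\<And>v. v \<in> V \<Longrightarrow> is_interval_filament (lft v) (rgt v) (f v)"
    using conjunct1[OF conjunct2[OF Rall]] by blast
  have R3: "\<And>a b. a \<in> V \<Longrightarrow> b \<in> V \<Longrightarrow> a \<noteq> b \<Longrightarrow> (E a b \<longleftrightarrow> filament lft rgt f a \<inter> filament lft rgt f b \<noteq> {})"
    using conjunct2[OF conjunct2[OF Rall]] by blast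
  have step: "filament lft rgt f w \<subseteq> bottom_region lft rgt f u"
    if v: "v \<in> V" "filament lft rgt f v \<subseteq> bottom_region lft rgt f u"
      and e: "E v w" and wu: "w \<noteq> u" "\<not> E u w" for v w
  proof -
    have wV: "w \<in> V" and vw: "v \<noteq> w" using R1[OF e] by auto
    have "filament lft rgt f v \<inter> filament lft rgt f w \<noteq> {}" using R3[OF v(1) wV vw] e by (rule iffD1)
    then obtain p where p1: "p \<in> filament lft rgt f v" and p2: "p \<in> filament lft rgt f w" by blast
    from p2 obtain t where pt: "p = (t, f w t)" and t1: "lft w \<le> t" "t \<le> rgt w"
      unfolding filament_def by blast
    have tb: "(t, f w t) \<in> bottom_region lft rgt f u" using p1 v(2) pt by blast
    have dis: "filament lft rgt f u \<inter> filament lft rgt f w = {}"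
      using R3[OF u wV wu(1)[symmetric]] wu(2) by blast
    have noint: "\<forall>x. lft u \<le> x \<and> x \<le> rgt u \<and> lft w \<le> x \<and> x \<le> rgt w \<longrightarrow> f w x \<noteq> f u x"
    proof (intro allI impI)
      fix x assume x: "lft u \<le> x \<and> x \<le> rgt u \<and> lft w \<le> x \<and> x \<le> rgt w"
      show "f w x \<noteq> f u x"
      proof
        assume eq: "f w x = f u x"
        have "(x, f u x) \<in> filament lft rgt f u" using x unfolding filament_def by blast
        moreover have "(x, f u x) \<in> filament lft rgt f w" using x eq unfolding filament_def by force
        ultimately show False using dis by blast
      qed
    qed
    note K = key[OF R2[OF u] R2[OF wV] _ _ t1 _ noint]
    from tb have tt: "lft u < t" "t < rgt u" "f w t < f u t" unfolding bottom_region_def by auto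
    note K2 = K[OF tt]
    show ?thesis
    proof
      fix q assume "q \<in> filament lft rgt f w"
      then obtain x where q: "q = (x, f w x)" "lft w \<le> x" "x \<le> rgt w" unfolding filament_def by blast
      then show "q \<in> bottom_region lft rgt f u" using K2 unfolding bottom_region_def by auto
    qed
  qed
  have "i \<le> n \<longrightarrow> rob i \<in> V \<and> filament lft rgt f (rob i) \<subseteq> bottom_region lft rgt f u" for i
  proof (induction i)
    case 0 then show ?case using start by simp
  next
    case (Suc i)
    show ?case
    proof
      assume si: "Suc i \<le> n"
      hence IH: "rob i \<in> V" "filament lft rgt f (rob i) \<subseteq> bottom_region lft rgt f u" using Suc by auto
      have "robber_move E (rob i) (rob (Suc i))" using moves si by auto
      hence "rob (Suc i) = rob i \<or> E (rob i) (rob (Suc i))" unfolding robber_move_def by auto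
      thus "rob (Suc i) \<in> V \<and> filament lft rgt f (rob (Suc i)) \<subseteq> bottom_region lft rgt f u"
      proof
        assume "E (rob i) (rob (Suc i))"
        moreover have "rob (Suc i) \<noteq> u" "\<not> E u (rob (Suc i))" using not_captured si by auto
        ultimately show ?thesis using step[OF IH] R1 by simp
      qed (use IH in auto)
    qed
  qed
  thus ?thesis by blast
qed

end
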